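(* For every $n\ge21$ and every integer $t$ with $\frac{n^2}{8}+\frac{n}{4}-\frac{11}{8}\le t\le \frac{n^2}{8}+\frac{n}{2}-2$, there exists an $(n,t)$-blocker.
   Context: For a convex $n$-gon: an edge is a segment between two vertices; diagonals are edges that are not sides of the polygon. Two edges cross if they share an interior point. A triangulation is a maximal set of pairwise non-crossing diagonals. A blocker is a set $B$ of diagonals having a diagonal in common with every triangulation; it is saturated if for every $e\in B$, $B\setminus\{e\}$ is not a blocker. An $(n,t)$-blocker is a saturated blocker of size $t$ for a convex $n$-gon. *)

theory Defs
  imports Complex_Main
begin

text \<open>Convex n-gon with vertices 0,...,n-1 in cyclic order. An edge is a 2-element
set of vertices. Sides are pairs of cyclically consecutive vertices.\<close>

definition edge :: "nat \<Rightarrow> nat set \<Rightarrow> bool" where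
  "edge n e \<longleftrightarrow> (\<exists>i j. i < n \<and> j < n \<and> i \<noteq> j \<and> e = {i, j})"

definition side :: "nat \<Rightarrow> nat set \<Rightarrow> bool" where
  "side n e \<longleftrightarrow> (\<exists>i<n. e = {i, (i + 1) mod n}) \<and> edge n e"

definition diagonal :: "nat \<Rightarrow> nat set \<Rightarrow> bool" where
  "diagonal n e \<longleftrightarrow> edge n e \<and> \<not> side n e"

text \<open>For points in convex position, two segments share an interior point iff
their endpoints strictly interleave in the cyclic order.\<close>
definition cross :: "nat set \<Rightarrow> nat set \<Rightarrow> bool" where
  "cross e f \<longleftrightarrow> (\<exists>a b c d. e = {a, b} \<and> f = {c, d} \<and> a < c \<and> c < b \<and> b < d)"

definition noncrossing :: "nat set set \<Rightarrow> bool" where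
  "noncrossing S \<longleftrightarrow> (\<forall>e\<in>S. \<forall>f\<in>S. \<not> cross e f)"

definition triangulation :: "nat \<Rightarrow> nat set set \<Rightarrow> bool" where
  "triangulation n T \<longleftrightarrow> (\<forall>e\<in>T. diagonal n e) \<and> noncrossing T \<and>
     (\<forall>e. diagonal n e \<and> e \<notin> T \<longrightarrow> \<not> noncrossing (insert e T))"

definition blocker :: "nat \<Rightarrow> nat set set \<Rightarrow> bool" where
  "blocker n B \<longleftrightarrow> (\<forall>e\<in>B. diagonal n e) \<and> (\<forall>T. triangulation n T \<longrightarrow> B \<inter> T \<noteq> {})"

definition saturated_blocker :: "nat \<Rightarrow> nat set set \<Rightarrow> bool" where
  "saturated_blocker n B \<longleftrightarrow> blocker n B \<and> (\<forall>e\<in>B. \<not> blocker n (B - {e}))"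

definition nt_blocker :: "nat \<Rightarrow> nat \<Rightarrow> nat set set \<Rightarrow> bool" where
  "nt_blocker n t B \<longleftrightarrow> saturated_blocker n B \<and> finite B \<and> card B = t"

end

theory Submission
  imports Defs
begin

definition diag :: "nat \<Rightarrow> nat \<Rightarrow> nat \<Rightarrow> bool" where
  "diag n i j \<longleftrightarrow> i < j \<and> j < n \<and> i + 2 \<le> j \<and> \<not> (i = 0 \<and> j = n - 1)"

lemma side_pair:
  assumes "i < j" "j < n"
  shows "side n {i,j} \<longleftrightarrow> j = i + 1 \<or> (i = 0 \<and> j = n - 1)"
proof
  assume "side n {i,j}"
  then obtain k where k: "k < n" "{i,j} = {k, (k+1) mod n}" unfolding side_def by blast
  show "j = i + 1 \<or> (i = 0 \<and> j = n - 1)"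
  proof (cases "k + 1 < n")
    case True
    then have "(k+1) mod n = k+1" by simp
    with k assms show ?thesis by (auto simp: doubleton_eq_iff)
  next
    case False
    then have "k = n - 1" using k by simp
    then have "(k+1) mod n = 0" using k by simp
    with k assms \<open>k = n - 1\<close> show ?thesis by (auto simp: doubleton_eq_iff)
  qed
next
  assume h: "j = i + 1 \<or> (i = 0 \<and> j = n - 1)"
  have e: "edge n {i,j}" unfolding edge_def using assms by (intro exI[of _ i] exI[of _ j]) auto
  from h show "side n {i,j}"
  proof
    assume "j = i + 1"
    then have "{i,j} = {i, (i+1) mod n}" using assms by simp
    then show ?thesis unfolding side_def using e assms by (intro conjI exI[of _ i]) auto
  next
    assume "i = 0 \<and> j = n - 1"
    then have "{i,j} = {n-1, (n-1+1) mod n}" using assms by auto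
    then show ?thesis unfolding side_def using e assms
      by (intro conjI exI[of _ "n-1"]) auto
  qed
qed

lemma diagonal_pair:
  assumes "i < j"
  shows "diagonal n {i,j} \<longleftrightarrow> diag n i j"
proof -
  have "edge n {i,j} \<longleftrightarrow> j < n"
    unfolding edge_def using assms by (auto simp: doubleton_eq_iff)
  then show ?thesis unfolding diagonal_def diag_def using side_pair[OF assms] assms
    by auto
qed

lemma diagonal_obtain:
  assumes "diagonal n e"
  obtains i j where "e = {i,j}" "diag n i j"
proof -
  from assms obtain i j where "i < n" "j < n" "i \<noteq> j" "e = {i,j}"
    unfolding diagonal_def edge_def by blast
  then show ?thesis
  proof (cases "i < j")
    case True then show ?thesis using that diagonal_pair assms \<open>e = {i,j}\<close> by blast
  next
    case False
    then have "j < i" "e = {j,i}" using \<open>i \<noteq> j\<close> \<open>e = {i,j}\<close> by auto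
    then show ?thesis using that diagonal_pair assms by blast
  qed
qed

definition xc :: "nat \<Rightarrow> nat \<Rightarrow> nat \<Rightarrow> nat \<Rightarrow> bool" where
  "xc a b c d \<longleftrightarrow> (a < c \<and> c < b \<and> b < d) \<or> (c < a \<and> a < d \<and> d < b)"

lemma cross_pair:
  assumes "a < b" "c < d"
  shows "cross {a,b} {c,d} \<longleftrightarrow> a < c \<and> c < b \<and> b < d"
proof
  assume "cross {a,b} {c,d}"
  then obtain a' b' c' d' where h: "{a,b} = {a',b'}" "{c,d} = {c',d'}" "a' < c'" "c' < b'" "b' < d'"
    unfolding cross_def by blast
  then have "a = a' \<and> b = b'" using assms by (auto simp: doubleton_eq_iff)
  moreover have "c = c' \<and> d = d'" using h assms by (auto simp: doubleton_eq_iff)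
  ultimately show "a < c \<and> c < b \<and> b < d" using h by auto
next
  assume "a < c \<and> c < b \<and> b < d"
  then show "cross {a,b} {c,d}" unfolding cross_def by blast
qed

lemma cs_pair:
  assumes "a < b" "c < d"
  shows "(cross {a,b} {c,d} \<or> cross {c,d} {a,b}) \<longleftrightarrow> xc a b c d"
  using cross_pair[OF assms] cross_pair[OF assms(2,1)] unfolding xc_def by auto

lemma cross_self: "\<not> cross e e"
  unfolding cross_def by (auto simp: doubleton_eq_iff)

lemma not_noncrossing_insert:
  assumes "noncrossing T" "\<not> noncrossing (insert e T)"
  shows "\<exists>f\<in>T. cross e f \<or> cross f e"
  using assms cross_self unfolding noncrossing_def by blast

lemma tri_diag: "triangulation n T \<Longrightarrow> e \<in> T \<Longrightarrow> diagonal n e"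
  unfolding triangulation_def by blast

lemma tri_nc: "triangulation n T \<Longrightarrow> e \<in> T \<Longrightarrow> f \<in> T \<Longrightarrow> \<not> cross e f"
  unfolding triangulation_def noncrossing_def by blast

lemma tri_max:
  assumes "triangulation n T" "diagonal n e" "e \<notin> T"
  shows "\<exists>f\<in>T. cross e f \<or> cross f e"
  using assms not_noncrossing_insert unfolding triangulation_def by blast

lemma tri_cross:
  assumes "triangulation n T" "diag n a b" "{a,b} \<notin> T"
  shows "\<exists>i j. {i,j} \<in> T \<and> diag n i j \<and> xc a b i j"
proof -
  have "diagonal n {a,b}" using assms diagonal_pair diag_def by auto
  then obtain f where f: "f \<in> T" "cross {a,b} f \<or> cross f {a,b}" using tri_max assms by blast
  then obtain i j where "f = {i,j}" "diag n i j" using tri_diag[OF assms(1)] diagonal_obtain by metis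
  then show ?thesis using f cs_pair[of a b i j] assms(2) unfolding diag_def by auto
qed

lemma tri_nc_pair:
  assumes "triangulation n T" "{a,b} \<in> T" "{c,d} \<in> T" "a < b" "c < d"
  shows "\<not> xc a b c d"
  using tri_nc[OF assms(1,2,3)] tri_nc[OF assms(1,3,2)] cs_pair[OF assms(4,5)] by blast

lemma tri_outer:
  assumes tri: "triangulation n T" and b: "2 \<le> b" "b + 2 \<le> n" and nd: "{0,b} \<notin> T"
  shows "\<exists>p q. {p,q} \<in> T \<and> 0 < p \<and> p < b \<and> b < q \<and> q < n \<and>
     (p = 1 \<or> {0,p} \<in> T) \<and> (q = n - 1 \<or> {0,q} \<in> T)"
proof -
  have "diag n 0 b" using b unfolding diag_def by auto
  then obtain i j where ij: "{i,j} \<in> T" "diag n i j" "xc 0 b i j" using tri_cross[OF tri] nd by blast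
  define P where "P = (\<lambda>pq. {fst pq, snd pq} \<in> T \<and> 0 < fst pq \<and> fst pq < b \<and> b < snd pq \<and> snd pq < n)"
  define f where "f = (\<lambda>pq::nat\<times>nat. snd pq - fst pq)"
  have "P (i,j)" using ij unfolding P_def xc_def diag_def by auto
  moreover have "\<forall>y. P y \<longrightarrow> f y < n + 1" unfolding P_def f_def by auto
  ultimately obtain pq where pq: "P pq" "\<forall>y. P y \<longrightarrow> f y \<le> f pq"
    using Lattices_Big.ex_has_greatest_nat[of P "(i,j)" f "n+1"] by blast
  define p where "p = fst pq"
  define q where "q = snd pq"
  have P1: "{p,q} \<in> T" "0 < p" "p < b" "b < q" "q < n" using pq(1) unfolding P_def p_def q_def by auto
  have mx: "\<And>x y. P (x,y) \<Longrightarrow> y - x \<le> q - p" using pq(2) unfolding f_def p_def q_def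
    by (metis fst_conv snd_conv)
  have A: "p = 1 \<or> {0,p} \<in> T"
  proof (rule ccontr)
    assume h: "\<not> (p = 1 \<or> {0,p} \<in> T)"
    then have "diag n 0 p" using P1 b unfolding diag_def by auto
    then obtain x y where xy: "{x,y} \<in> T" "diag n x y" "xc 0 p x y" using tri_cross[OF tri] h by blast
    have "x < y" "p < q" using xy(2) P1 unfolding diag_def by auto
    then have "\<not> xc x y p q" using tri_nc_pair[OF tri xy(1) P1(1)] by blast
    then have "P (x,y)" "q - p < y - x" using xy P1 unfolding P_def xc_def diag_def by auto
    then show False using mx by (meson leD)
  qed
  have B: "q = n - 1 \<or> {0,q} \<in> T"
  proof (rule ccontr)
    assume h: "\<not> (q = n - 1 \<or> {0,q} \<in> T)"
    then have "diag n 0 q" using P1 b unfolding diag_def by auto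
    then obtain x y where xy: "{x,y} \<in> T" "diag n x y" "xc 0 q x y" using tri_cross[OF tri] h by blast
    have "x < y" "p < q" using xy(2) P1 unfolding diag_def by auto
    then have "\<not> xc x y p q" using tri_nc_pair[OF tri xy(1) P1(1)] by blast
    then have "P (x,y)" "q - p < y - x" using xy P1 unfolding P_def xc_def diag_def by auto
    then show False using mx by (meson leD)
  qed
  show ?thesis using P1 A B by blast
qed

lemma finite_diags: "finite {e. diagonal n e}"
proof -
  have "{e. diagonal n e} \<subseteq> Pow {..<n}" unfolding diagonal_def edge_def by auto
  then show ?thesis by (rule finite_subset) auto
qed

lemma extend_tri:
  assumes "\<forall>e\<in>N. diagonal n e" "noncrossing N"
  shows "\<exists>T. triangulation n T \<and> N \<subseteq> T"
proof -
  define P where "P = (\<lambda>S. N \<subseteq> S \<and> (\<forall>e\<in>S. diagonal n e) \<and> noncrossing S)"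
  have "P N" using assms unfolding P_def by auto
  moreover have "\<forall>S. P S \<longrightarrow> card S < card {e. diagonal n e} + 1"
  proof (intro allI impI)
    fix S assume "P S"
    then have "S \<subseteq> {e. diagonal n e}" unfolding P_def by auto
    then have "card S \<le> card {e. diagonal n e}" using card_mono[OF finite_diags] by blast
    then show "card S < card {e. diagonal n e} + 1" by simp
  qed
  ultimately obtain S where S: "P S" "\<forall>S'. P S' \<longrightarrow> card S' \<le> card S"
    using Lattices_Big.ex_has_greatest_nat[of P N card] by blast
  have "S \<subseteq> {e. diagonal n e}" using S(1) unfolding P_def by auto
  then have fin: "finite S" using finite_diags finite_subset by blast
  have "triangulation n S"
    unfolding triangulation_def
  proof (intro conjI allI impI)
    show "\<forall>e\<in>S. diagonal n e" "noncrossing S" using S(1) unfolding P_def by auto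
  next
    fix e assume e: "diagonal n e \<and> e \<notin> S"
    show "\<not> noncrossing (insert e S)"
    proof
      assume "noncrossing (insert e S)"
      then have "P (insert e S)" using S(1) e unfolding P_def by auto
      then have "card (insert e S) \<le> card S" using S(2) by blast
      then show False using fin e by simp
    qed
  qed
  then show ?thesis using S(1) unfolding P_def by blast
qed

lemma not_blocker_minus:
  assumes "\<forall>g\<in>N. diagonal n g" "noncrossing N"
    and "\<forall>f\<in>B - {e}. \<exists>g\<in>N. cross f g \<or> cross g f"
  shows "\<not> blocker n (B - {e})"
proof
  assume bl: "blocker n (B - {e})"
  obtain T where T: "triangulation n T" "N \<subseteq> T" using extend_tri assms(1,2) by blast
  then obtain f where f: "f \<in> B - {e}" "f \<in> T" using bl unfolding blocker_def by blast
  then obtain g where "g \<in> N" "cross f g \<or> cross g f" using assms(3) by blast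
  then show False using tri_nc[OF T(1)] f T(2) by blast
qed

lemma cross_sep:
  assumes "\<forall>v\<in>e. x \<le> v \<and> v \<le> y" "\<forall>v\<in>f. v \<le> x \<or> y \<le> v"
  shows "\<not> cross e f \<and> \<not> cross f e"
proof -
  have 1: "\<not> cross e f"
  proof
    assume "cross e f"
    then obtain a b c d where "e = {a,b}" "f = {c,d}" "a < c" "c < b" "b < d" unfolding cross_def by blast
    then show False using assms by force
  qed
  have 2: "\<not> cross f e"
  proof
    assume "cross f e"
    then obtain a b c d where "f = {a,b}" "e = {c,d}" "a < c" "c < b" "b < d" unfolding cross_def by blast
    then show False using assms by force
  qed
  show ?thesis using 1 2 by blast
qed

lemma cross_share:
  assumes "w \<in> e" "w \<in> f" shows "\<not> cross e f"
proof
  assume "cross e f"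
  then obtain a b c d where "e = {a,b}" "f = {c,d}" "a < c" "c < b" "b < d" unfolding cross_def by blast
  then show False using assms by auto
qed

lemma cs_any:
  assumes "i < j" "a \<noteq> b" "xc i j (min a b) (max a b)"
  shows "cross {i,j} {a,b} \<or> cross {a,b} {i,j}"
proof -
  have "{a,b} = {min a b, max a b}" by (auto simp: min_def max_def)
  moreover have "min a b < max a b" using assms(2) by (auto simp: min_def max_def)
  ultimately show ?thesis using cs_pair[OF assms(1)] assms(3) by metis
qed

lemma diag_any:
  assumes "a \<noteq> b" "diag n (min a b) (max a b)"
  shows "diagonal n {a,b}"
proof -
  have "{a,b} = {min a b, max a b}" by (auto simp: min_def max_def)
  moreover have "min a b < max a b" using assms(1) by (auto simp: min_def max_def)
  ultimately show ?thesis using diagonal_pair assms(2) by metis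
qed

definition fanN :: "nat \<Rightarrow> nat \<Rightarrow> nat \<Rightarrow> nat \<Rightarrow> nat \<Rightarrow> nat set set" where
  "fanN n x y w1 w2 = {{x,y}} \<union> {{w1,z} | z. x \<le> z \<and> z \<le> y \<and> diagonal n {w1,z}}
     \<union> {{w2,z} | z. (z \<le> x \<or> y \<le> z) \<and> z < n \<and> diagonal n {w2,z}}"

lemma fanN_diag:
  assumes "diag n x y" shows "\<forall>g\<in>fanN n x y w1 w2. diagonal n g"
  using assms diagonal_pair[of x y n] unfolding fanN_def diag_def by auto

lemma fanN_nc:
  assumes "diag n x y" "x \<le> w1" "w1 \<le> y" "w2 \<le> x \<or> y \<le> w2"
  shows "noncrossing (fanN n x y w1 w2)"
proof -
  define I where "I = (\<lambda>g::nat set. \<forall>v\<in>g. x \<le> v \<and> v \<le> y)"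
  define Ou where "Ou = (\<lambda>g::nat set. \<forall>v\<in>g. v \<le> x \<or> y \<le> v)"
  have cl: "\<And>g. g \<in> fanN n x y w1 w2 \<Longrightarrow> (w1 \<in> g \<and> I g) \<or> (w2 \<in> g \<and> Ou g) \<or> (I g \<and> Ou g)"
    using assms unfolding fanN_def I_def Ou_def by auto
  show ?thesis unfolding noncrossing_def
  proof (intro ballI)
    fix g h assume g: "g \<in> fanN n x y w1 w2" and h: "h \<in> fanN n x y w1 w2"
    show "\<not> cross g h"
      using cl[OF g] cl[OF h] cross_share[of w1 g h] cross_share[of w2 g h]
        cross_sep[of g x y h] cross_sep[of h x y g] unfolding I_def Ou_def by blast
  qed
qed

lemma fan_in:
  assumes "diag n i j" "x \<le> i" "j \<le> y" "(i,j) \<noteq> (x,y)" "w \<noteq> i" "w \<noteq> j" "x \<le> w" "w \<le> y" "y < n"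
  shows "\<exists>z. x \<le> z \<and> z \<le> y \<and> w \<noteq> z \<and> diag n (min w z) (max w z) \<and> xc i j (min w z) (max w z)"
proof (cases "i < w \<and> w < j")
  case True
  show ?thesis
  proof (cases "x < i")
    case True
    then show ?thesis using \<open>i < w \<and> w < j\<close> assms
      by (intro exI[of _ x]) (auto simp: diag_def xc_def min_def max_def)
  next
    case False
    then have "j < y" using assms by auto
    then show ?thesis using \<open>i < w \<and> w < j\<close> assms False
      by (intro exI[of _ y]) (auto simp: diag_def xc_def min_def max_def)
  qed
next
  case False
  then show ?thesis using assms
    by (intro exI[of _ "i+1"]) (auto simp: diag_def xc_def min_def max_def)
qed

lemma mk_lt: "w < z \<Longrightarrow> diag n w z \<Longrightarrow> xc i j w z \<Longrightarrow> w \<noteq> z \<and> diag n (min w z) (max w z) \<and> xc i j (min w z) (max w z)"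
  by simp
lemma mk_gt: "z < w \<Longrightarrow> diag n z w \<Longrightarrow> xc i j z w \<Longrightarrow> w \<noteq> z \<and> diag n (min w z) (max w z) \<and> xc i j (min w z) (max w z)"
  by simp

lemma fan_out:
  assumes "diag n i j" "j \<le> x \<or> y \<le> i \<or> (i \<le> x \<and> y \<le> j)" "(i,j) \<noteq> (x,y)" "w \<noteq> i" "w \<noteq> j"
    "w \<le> x \<or> y \<le> w" "w < n" "diag n x y"
  shows "\<exists>z. (z \<le> x \<or> y \<le> z) \<and> z < n \<and> w \<noteq> z \<and> diag n (min w z) (max w z) \<and> xc i j (min w z) (max w z)"
proof -
  have d: "i < j" "j < n" "i + 2 \<le> j" "\<not> (i = 0 \<and> j = n - 1)" using assms(1) unfolding diag_def by auto
  have e: "x < y" "y < n" "x + 2 \<le> y" "\<not> (x = 0 \<and> y = n - 1)" using assms(8) unfolding diag_def by auto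
  show ?thesis
  proof (cases "i < w \<and> w < j")
    case T: True
    show ?thesis
    proof (cases "j \<le> x")
      case True
      have "w < y" "diag n w y" "xc i j w y" using T True d e unfolding diag_def xc_def by auto
      then show ?thesis using e by (intro exI[of _ y] conjI mk_lt) auto
    next
      case F1: False
      show ?thesis
      proof (cases "y \<le> i")
        case True
        have "x < w" "diag n x w" "xc i j x w" using T True d e unfolding diag_def xc_def by auto
        then show ?thesis using e by (intro exI[of _ x] conjI mk_gt) auto
      next
        case F2: False
        then have W: "i \<le> x" "y \<le> j" using assms(2) F1 by auto
        show ?thesis
        proof (cases "0 < i")
          case True
          have "0 < w" "diag n 0 w" "xc i j 0 w" using T True d e W unfolding diag_def xc_def by auto
          then show ?thesis using e by (intro exI[of _ 0] conjI mk_gt) auto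
        next
          case False
          then have "i = 0" by simp
          then have "j < n - 1" using d by auto
          have "w < n - 1" "diag n w (n-1)" "xc i j w (n-1)" using T \<open>i = 0\<close> \<open>j < n - 1\<close> d e W unfolding diag_def xc_def by auto
          then show ?thesis using e W by (intro exI[of _ "n-1"] conjI mk_lt) auto
        qed
      qed
    qed
  next
    case T: False
    show ?thesis
    proof (cases "i < x \<or> y \<le> i")
      case True
      then have z: "i + 1 \<le> x \<or> y \<le> i + 1" "i + 1 < n" using d by auto
      show ?thesis
      proof (cases "w < i")
        case True
        have "diag n w (i+1)" "xc i j w (i+1)" using True d unfolding diag_def xc_def by auto
        then show ?thesis using z True by (intro exI[of _ "i+1"] conjI mk_lt) auto
      next
        case False
        then have "j < w" using T assms(4,5) by auto
        have "diag n (i+1) w" "xc i j (i+1) w" using \<open>j < w\<close> d assms(7) unfolding diag_def xc_def by auto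
        then show ?thesis using z \<open>j < w\<close> d by (intro exI[of _ "i+1"] conjI mk_gt) auto
      qed
    next
      case False
      then have ix: "i = x" using assms(2) d e by auto
      then have "j \<noteq> y" using assms(3) by auto
      then have "y < j" using assms(2) False d e ix by auto
      then have z: "y \<le> j - 1" "j - 1 < n" using d by auto
      show ?thesis
      proof (cases "w < i")
        case True
        have "diag n w (j-1)" "xc i j w (j-1)" using True d \<open>y < j\<close> e ix unfolding diag_def xc_def by auto
        then show ?thesis using z True d by (intro exI[of _ "j-1"] conjI mk_lt) auto
      next
        case False
        then have "j < w" using T assms(4,5) by auto
        have "diag n (j-1) w" "xc i j (j-1) w" using \<open>j < w\<close> d assms(7) ix e unfolding diag_def xc_def by auto
        then show ?thesis using z \<open>j < w\<close> d by (intro exI[of _ "j-1"] conjI mk_gt) auto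
      qed
    qed
  qed
qed

lemma fanN_cross:
  assumes xy: "diag n x y" and w1: "x \<le> w1" "w1 \<le> y" and w2: "w2 \<le> x \<or> y \<le> w2" "w2 < n"
    and ij: "diag n i j"
    and c: "xc i j x y \<or> (x \<le> i \<and> j \<le> y \<and> (i,j) \<noteq> (x,y) \<and> w1 \<noteq> i \<and> w1 \<noteq> j)
      \<or> ((j \<le> x \<or> y \<le> i \<or> (i \<le> x \<and> y \<le> j)) \<and> (i,j) \<noteq> (x,y) \<and> w2 \<noteq> i \<and> w2 \<noteq> j)"
  shows "\<exists>g\<in>fanN n x y w1 w2. cross {i,j} g \<or> cross g {i,j}"
proof -
  have ij': "i < j" using ij unfolding diag_def by auto
  have yn: "y < n" using xy unfolding diag_def by auto
  consider "xc i j x y" | "x \<le> i \<and> j \<le> y \<and> (i,j) \<noteq> (x,y) \<and> w1 \<noteq> i \<and> w1 \<noteq> j"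
    | "(j \<le> x \<or> y \<le> i \<or> (i \<le> x \<and> y \<le> j)) \<and> (i,j) \<noteq> (x,y) \<and> w2 \<noteq> i \<and> w2 \<noteq> j"
    using c by argo
  then show ?thesis
  proof cases
    case 1
    have "x < y" using xy unfolding diag_def by auto
    then have "cross {i,j} {x,y} \<or> cross {x,y} {i,j}" using cs_pair[OF ij'] 1 by blast
    then show ?thesis unfolding fanN_def by blast
  next
    case 2
    then obtain z where z: "x \<le> z" "z \<le> y" "w1 \<noteq> z" "diag n (min w1 z) (max w1 z)" "xc i j (min w1 z) (max w1 z)"
      using fan_in[OF ij _ _ _ _ _ w1 yn] 2 by auto
    have "diagonal n {w1,z}" using diag_any z by blast
    then have "{w1,z} \<in> fanN n x y w1 w2" unfolding fanN_def using z(1,2) by blast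
    then show ?thesis using cs_any[OF ij' z(3) z(5)] by blast
  next
    case 3
    then obtain z where z: "z \<le> x \<or> y \<le> z" "z < n" "w2 \<noteq> z" "diag n (min w2 z) (max w2 z)" "xc i j (min w2 z) (max w2 z)"
      using fan_out[OF ij _ _ _ _ w2 xy] 3 by auto
    have "diagonal n {w2,z}" using diag_any z by blast
    then have "{w2,z} \<in> fanN n x y w1 w2" unfolding fanN_def using z(1,2) by blast
    then show ?thesis using cs_any[OF ij' z(3) z(5)] by blast
  qed
qed


definition condC :: "nat \<Rightarrow> nat \<Rightarrow> nat \<Rightarrow> nat \<Rightarrow> nat \<Rightarrow> nat \<Rightarrow> nat \<Rightarrow> bool" where
  "condC n x y w1 w2 i j \<longleftrightarrow> diag n i j \<and> (xc i j x y \<or> (x \<le> i \<and> j \<le> y \<and> (i,j) \<noteq> (x,y) \<and> w1 \<noteq> i \<and> w1 \<noteq> j)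
      \<or> ((j \<le> x \<or> y \<le> i \<or> (i \<le> x \<and> y \<le> j)) \<and> (i,j) \<noteq> (x,y) \<and> w2 \<noteq> i \<and> w2 \<noteq> j))"

lemma sat_elem:
  assumes xy: "diag n x y" and w1: "x \<le> w1" "w1 \<le> y" and w2: "w2 \<le> x \<or> y \<le> w2" "w2 < n"
    and BP: "\<forall>f\<in>B - {{x,y}}. \<exists>i j. f = {i,j} \<and> condC n x y w1 w2 i j"
  shows "\<not> blocker n (B - {{x,y}})"
proof (rule not_blocker_minus[of "fanN n x y w1 w2"])
  show "\<forall>g\<in>fanN n x y w1 w2. diagonal n g" using fanN_diag[OF xy] .
  show "noncrossing (fanN n x y w1 w2)" using fanN_nc[OF xy w1 w2(1)] .
  show "\<forall>f\<in>B - {{x, y}}. \<exists>g\<in>fanN n x y w1 w2. cross f g \<or> cross g f"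
  proof
    fix f assume "f \<in> B - {{x,y}}"
    then obtain i j where ij: "f = {i,j}" "condC n x y w1 w2 i j"
      using BP by blast
    have "\<exists>g\<in>fanN n x y w1 w2. cross {i,j} g \<or> cross g {i,j}"
      by (rule fanN_cross[OF xy w1 w2]) (use ij(2) in \<open>simp_all add: condC_def\<close>)
    then show "\<exists>g\<in>fanN n x y w1 w2. cross f g \<or> cross g f" using ij(1) by simp
  qed
qed

definition bt :: "nat \<Rightarrow> nat \<Rightarrow> nat \<Rightarrow> nat \<Rightarrow> nat \<Rightarrow> nat \<Rightarrow> bool" where
  "bt n b u l i j \<longleftrightarrow> (i = 0 \<and> j = b) \<or> (1 \<le> i \<and> i \<le> u \<and> n - l \<le> j) \<or> (i = u \<and> j = b - 1)
     \<or> (i < u \<and> u < j \<and> j < b - 1) \<or> (i = b + 1 \<and> j = n - l) \<or> (b + 1 < i \<and> i < n - l \<and> n - l < j)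
     \<or> (i = 0 \<and> b + 1 < j \<and> j < n - l)"

definition Bp :: "nat \<Rightarrow> nat \<Rightarrow> nat \<Rightarrow> nat \<Rightarrow> (nat \<times> nat) set" where
  "Bp n b u l = {(i,j). i < j \<and> j < n \<and> bt n b u l i j}"

definition Bs :: "nat \<Rightarrow> nat \<Rightarrow> nat \<Rightarrow> nat \<Rightarrow> nat set set" where
  "Bs n b u l = (\<lambda>(i,j). {i,j}) ` Bp n b u l"

definition ok :: "nat \<Rightarrow> nat \<Rightarrow> nat \<Rightarrow> nat \<Rightarrow> bool" where
  "ok n b u l \<longleftrightarrow> 1 \<le> u \<and> u + 3 \<le> b \<and> 1 \<le> l \<and> b + l + 3 \<le> n"

lemma bt_cases:
  assumes "bt n b u l i j"
  obtains "i = 0" "j = b" | "1 \<le> i" "i \<le> u" "n - l \<le> j" | "i = u" "j = b - 1"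
     | "i < u" "u < j" "j < b - 1" | "i = b + 1" "j = n - l" | "b + 1 < i" "i < n - l" "n - l < j"
     | "i = 0" "b + 1 < j" "j < n - l"
  using assms unfolding bt_def by blast

lemma Bp_diag:
  assumes "ok n b u l" "(i,j) \<in> Bp n b u l"
  shows "diag n i j"
proof -
  have h: "i < j" "j < n" "bt n b u l i j" using assms(2) unfolding Bp_def by auto
  have o: "1 \<le> u" "u + 3 \<le> b" "1 \<le> l" "b + l + 3 \<le> n" using assms(1) unfolding ok_def by auto
  from h(3) show ?thesis
    by (rule bt_cases) (use h(1,2) o in \<open>auto simp: diag_def\<close>)
qed

lemma sat_X:
  assumes "ok n b u l" "(i,j) \<in> Bp n b u l" "(i,j) \<noteq> (x,y)"
    "1 \<le> x" "x \<le> u" "n - l \<le> y" "y < n"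
  shows "condC n x y b 0 i j"
proof -
  have h: "i < j" "j < n" "bt n b u l i j" using assms(2) unfolding Bp_def by auto
  have o: "1 \<le> u" "u + 3 \<le> b" "1 \<le> l" "b + l + 3 \<le> n" using assms(1) unfolding ok_def by auto
  have d: "diag n i j" using Bp_diag assms by blast
  from h(3) show ?thesis
    by (rule bt_cases) (use h(1,2) o assms(3-) d in \<open>auto simp: condC_def xc_def\<close>)
qed


lemma sat_D:
  assumes "ok n b u l" "(i,j) \<in> Bp n b u l" "(i,j) \<noteq> (x,y)"
    "x = 0" "y = b"
  shows "condC n x y b b i j"
proof -
  have h: "i < j" "j < n" "bt n b u l i j" using assms(2) unfolding Bp_def by auto
  have o: "1 \<le> u" "u + 3 \<le> b" "1 \<le> l" "b + l + 3 \<le> n" using assms(1) unfolding ok_def by auto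
  have d: "diag n i j" using Bp_diag assms by blast
  from h(3) show ?thesis
    by (rule bt_cases) (use h(1,2) o assms(3-) d in \<open>auto simp: condC_def xc_def\<close>)
qed

lemma sat_W0:
  assumes "ok n b u l" "(i,j) \<in> Bp n b u l" "(i,j) \<noteq> (x,y)"
    "x = u" "y = b - 1"
  shows "condC n x y (b-1) (b-1) i j"
proof -
  have h: "i < j" "j < n" "bt n b u l i j" using assms(2) unfolding Bp_def by auto
  have o: "1 \<le> u" "u + 3 \<le> b" "1 \<le> l" "b + l + 3 \<le> n" using assms(1) unfolding ok_def by auto
  have d: "diag n i j" using Bp_diag assms by blast
  from h(3) show ?thesis
    by (rule bt_cases) (use h(1,2) o assms(3-) d in \<open>auto simp: condC_def xc_def\<close>)
qed

lemma sat_W1: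
  assumes "ok n b u l" "(i,j) \<in> Bp n b u l" "(i,j) \<noteq> (x,y)"
    "x < u" "u < y" "y < b - 1"
  shows "condC n x y u (b-1) i j"
proof -
  have h: "i < j" "j < n" "bt n b u l i j" using assms(2) unfolding Bp_def by auto
  have o: "1 \<le> u" "u + 3 \<le> b" "1 \<le> l" "b + l + 3 \<le> n" using assms(1) unfolding ok_def by auto
  have d: "diag n i j" using Bp_diag assms by blast
  from h(3) show ?thesis
    by (rule bt_cases) (use h(1,2) o assms(3-) d in \<open>auto simp: condC_def xc_def\<close>)
qed

lemma sat_V0:
  assumes "ok n b u l" "(i,j) \<in> Bp n b u l" "(i,j) \<noteq> (x,y)"
    "x = b + 1" "y = n - l"
  shows "condC n x y (b+1) (b+1) i j"
proof -
  have h: "i < j" "j < n" "bt n b u l i j" using assms(2) unfolding Bp_def by auto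
  have o: "1 \<le> u" "u + 3 \<le> b" "1 \<le> l" "b + l + 3 \<le> n" using assms(1) unfolding ok_def by auto
  have d: "diag n i j" using Bp_diag assms by blast
  from h(3) show ?thesis
    by (rule bt_cases) (use h(1,2) o assms(3-) d in \<open>auto simp: condC_def xc_def\<close>)
qed

lemma sat_V1:
  assumes "ok n b u l" "(i,j) \<in> Bp n b u l" "(i,j) \<noteq> (x,y)"
    "b + 1 < x" "x < n - l" "n - l < y" "y < n"
  shows "condC n x y (n-l) (b+1) i j"
proof -
  have h: "i < j" "j < n" "bt n b u l i j" using assms(2) unfolding Bp_def by auto
  have o: "1 \<le> u" "u + 3 \<le> b" "1 \<le> l" "b + l + 3 \<le> n" using assms(1) unfolding ok_def by auto
  have d: "diag n i j" using Bp_diag assms by blast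
  from h(3) show ?thesis
    by (rule bt_cases) (use h(1,2) o assms(3-) d in \<open>auto simp: condC_def xc_def\<close>)
qed

lemma sat_V2:
  assumes "ok n b u l" "(i,j) \<in> Bp n b u l" "(i,j) \<noteq> (x,y)"
    "x = 0" "b + 1 < y" "y < n - l"
  shows "condC n x y (b+1) (n-l) i j"
proof -
  have h: "i < j" "j < n" "bt n b u l i j" using assms(2) unfolding Bp_def by auto
  have o: "1 \<le> u" "u + 3 \<le> b" "1 \<le> l" "b + l + 3 \<le> n" using assms(1) unfolding ok_def by auto
  have d: "diag n i j" using Bp_diag assms by blast
  from h(3) show ?thesis
    by (rule bt_cases) (use h(1,2) o assms(3-) d in \<open>auto simp: condC_def xc_def\<close>)
qed

lemma sat_generic:
  assumes "ok n b u l" "(x,y) \<in> Bp n b u l" "x \<le> w1" "w1 \<le> y" "w2 \<le> x \<or> y \<le> w2" "w2 < n"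
    "\<And>i j. (i,j) \<in> Bp n b u l \<Longrightarrow> (i,j) \<noteq> (x,y) \<Longrightarrow> condC n x y w1 w2 i j"
  shows "\<not> blocker n (Bs n b u l - {{x,y}})"
proof (rule sat_elem)
  show "diag n x y" using Bp_diag assms(1,2) .
  show "x \<le> w1" "w1 \<le> y" "w2 \<le> x \<or> y \<le> w2" "w2 < n" using assms(3-6) .
  show "\<forall>f\<in>Bs n b u l - {{x, y}}. \<exists>i j. f = {i, j} \<and> condC n x y w1 w2 i j"
  proof
    fix f assume f: "f \<in> Bs n b u l - {{x,y}}"
    then obtain i j where ij: "(i,j) \<in> Bp n b u l" "f = {i,j}" unfolding Bs_def by auto
    then have "(i,j) \<noteq> (x,y)" using f by auto
    then show "\<exists>i j. f = {i, j} \<and> condC n x y w1 w2 i j" using ij assms(7) by blast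
  qed
qed

lemma Bs_sat:
  assumes "ok n b u l" "e \<in> Bs n b u l"
  shows "\<not> blocker n (Bs n b u l - {e})"
proof -
  obtain x y where xy: "(x,y) \<in> Bp n b u l" "e = {x,y}" using assms(2) unfolding Bs_def by auto
  have h: "x < y" "y < n" "bt n b u l x y" using xy(1) unfolding Bp_def by auto
  have o: "1 \<le> u" "u + 3 \<le> b" "1 \<le> l" "b + l + 3 \<le> n" using assms(1) unfolding ok_def by auto
  from h(3) show ?thesis
  proof (rule bt_cases)
    assume c: "x = 0" "y = b"
    show ?thesis unfolding xy(2)
      by (rule sat_generic[OF assms(1) xy(1), of b b]) (use c o h sat_D[OF assms(1) _ _ c] in auto)
  next
    assume c: "1 \<le> x" "x \<le> u" "n - l \<le> y"
    show ?thesis unfolding xy(2)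
      by (rule sat_generic[OF assms(1) xy(1), of b 0]) (use c o h sat_X[OF assms(1) _ _ c h(2)] in auto)
  next
    assume c: "x = u" "y = b - 1"
    show ?thesis unfolding xy(2)
      by (rule sat_generic[OF assms(1) xy(1), of "b-1" "b-1"]) (use c o h sat_W0[OF assms(1) _ _ c] in auto)
  next
    assume c: "x < u" "u < y" "y < b - 1"
    show ?thesis unfolding xy(2)
      by (rule sat_generic[OF assms(1) xy(1), of u "b-1"]) (use c o h sat_W1[OF assms(1) _ _ c] in auto)
  next
    assume c: "x = b + 1" "y = n - l"
    show ?thesis unfolding xy(2)
      by (rule sat_generic[OF assms(1) xy(1), of "b+1" "b+1"]) (use c o h sat_V0[OF assms(1) _ _ c] in auto)
  next
    assume c: "b + 1 < x" "x < n - l" "n - l < y"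
    show ?thesis unfolding xy(2)
      by (rule sat_generic[OF assms(1) xy(1), of "n-l" "b+1"]) (use c o h sat_V1[OF assms(1) _ _ c h(2)] in auto)
  next
    assume c: "x = 0" "b + 1 < y" "y < n - l"
    show ?thesis unfolding xy(2)
      by (rule sat_generic[OF assms(1) xy(1), of "b+1" "n-l"]) (use c o h sat_V2[OF assms(1) _ _ c] in auto)
  qed
qed

lemma Bp_mem: "i < j \<Longrightarrow> j < n \<Longrightarrow> bt n b u l i j \<Longrightarrow> {i,j} \<in> Bs n b u l"
  unfolding Bs_def Bp_def by force

lemma hit: "{i,j} \<in> T \<Longrightarrow> i < j \<Longrightarrow> j < n \<Longrightarrow> bt n b u l i j \<Longrightarrow> Bs n b u l \<inter> T \<noteq> {}"
  using Bp_mem by blast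

lemma Bs_blocker:
  assumes "ok n b u l"
  shows "blocker n (Bs n b u l)"
  unfolding blocker_def
proof (intro conjI allI impI)
  have o: "1 \<le> u" "u + 3 \<le> b" "1 \<le> l" "b + l + 3 \<le> n" using assms(1) unfolding ok_def by auto
  show "\<forall>e\<in>Bs n b u l. diagonal n e"
  proof
    fix e assume "e \<in> Bs n b u l"
    then obtain i j where "(i,j) \<in> Bp n b u l" "e = {i,j}" unfolding Bs_def by auto
    then show "diagonal n e" using Bp_diag[OF assms] diagonal_pair unfolding diag_def by metis
  qed
  fix T assume tri: "triangulation n T"
  show "Bs n b u l \<inter> T \<noteq> {}"
  proof (cases "{0,b} \<in> T")
    case True
    then show ?thesis by (rule hit) (use o in \<open>auto simp: bt_def\<close>)
  next
    case False
    then obtain p q where pq: "{p,q} \<in> T" "0 < p" "p < b" "b < q" "q < n"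
      "p = 1 \<or> {0,p} \<in> T" "q = n - 1 \<or> {0,q} \<in> T"
      using tri_outer[OF tri, of b] o by auto
    consider "p \<le> u" "n - l \<le> q" | "u < p" "p < b - 1" | "p = b - 1" | "p \<le> u" "q = b + 1"
      | "p \<le> u" "b + 1 < q" "q < n - l" using pq o by linarith
    then show ?thesis
    proof cases
      case 1
      show ?thesis by (rule hit[OF pq(1)]) (use 1 pq o in \<open>auto simp: bt_def\<close>)
    next
      case 2
      then have "{0,p} \<in> T" using pq o by auto
      then show ?thesis by (rule hit) (use 2 pq o in \<open>auto simp: bt_def\<close>)
    next
      case 3
      then have T0: "{0,b-1} \<in> T" using pq o by auto
      show ?thesis
      proof (cases "{u,b-1} \<in> T")
        case True
        then show ?thesis by (rule hit) (use o in \<open>auto simp: bt_def\<close>)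
      next
        case False
        have "diag n u (b-1)" using o unfolding diag_def by auto
        then obtain i j where ij: "{i,j} \<in> T" "diag n i j" "xc u (b-1) i j"
          using tri_cross[OF tri] False by blast
        have "i < j" using ij(2) unfolding diag_def by auto
        then have "\<not> xc 0 (b-1) i j" using tri_nc_pair[OF tri T0 ij(1)] o by auto
        then have "i < u" "u < j" "j < b - 1" using ij(3) o unfolding xc_def by auto
        then show ?thesis by (intro hit[OF ij(1)]) (use o in \<open>auto simp: bt_def\<close>)
      qed
    next
      case 4
      then have T0: "{0,b+1} \<in> T" using pq o by auto
      show ?thesis
      proof (cases "{b+1,n-l} \<in> T")
        case True
        then show ?thesis by (rule hit) (use o in \<open>auto simp: bt_def\<close>)
      next
        case False
        have "diag n (b+1) (n-l)" using o unfolding diag_def by auto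
        then obtain i j where ij: "{i,j} \<in> T" "diag n i j" "xc (b+1) (n-l) i j"
          using tri_cross[OF tri] False by blast
        have ijn: "i < j" "j < n" using ij(2) unfolding diag_def by auto
        then have nx: "\<not> xc 0 (b+1) i j" using tri_nc_pair[OF tri T0 ij(1)] o by auto
        consider "b + 1 < i" "i < n - l" "n - l < j" | "i = 0" "b + 1 < j" "j < n - l"
          using ij(3) nx o unfolding xc_def by auto
        then show ?thesis
        proof cases
          case 1 then show ?thesis by (intro hit[OF ij(1)]) (use o ijn in \<open>auto simp: bt_def\<close>)
        next
          case 2 then show ?thesis by (intro hit[OF ij(1)]) (use o ijn in \<open>auto simp: bt_def\<close>)
        qed
      qed
    next
      case 5
      then have "{0,q} \<in> T" using pq o by auto
      then show ?thesis by (rule hit) (use 5 pq o in \<open>auto simp: bt_def\<close>)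
    qed
  qed
qed

lemma Bp_eq:
  assumes "ok n b u l"
  shows "Bp n b u l = {(0,b)} \<union> ({1..u} \<times> {n-l..<n} \<union> ({(u,b-1)} \<union> ({..<u} \<times> {u<..<b-1}
     \<union> ({(b+1,n-l)} \<union> ({b+1<..<n-l} \<times> {n-l<..<n} \<union> {0} \<times> {b+1<..<n-l})))))"
proof -
  have o: "1 \<le> u" "u + 3 \<le> b" "1 \<le> l" "b + l + 3 \<le> n" using assms(1) unfolding ok_def by auto
  show ?thesis
  proof (intro equalityI subsetI)
    fix p assume "p \<in> Bp n b u l"
    then obtain i j where p: "p = (i,j)" "i < j" "j < n" "bt n b u l i j" unfolding Bp_def by auto
    from p(4) show "p \<in> {(0,b)} \<union> ({1..u} \<times> {n-l..<n} \<union> ({(u,b-1)} \<union> ({..<u} \<times> {u<..<b-1}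
     \<union> ({(b+1,n-l)} \<union> ({b+1<..<n-l} \<times> {n-l<..<n} \<union> {0} \<times> {b+1<..<n-l})))))"
      by (rule bt_cases) (use p in simp_all)
  next
    fix p assume h: "p \<in> {(0,b)} \<union> ({1..u} \<times> {n-l..<n} \<union> ({(u,b-1)} \<union> ({..<u} \<times> {u<..<b-1}
     \<union> ({(b+1,n-l)} \<union> ({b+1<..<n-l} \<times> {n-l<..<n} \<union> {0} \<times> {b+1<..<n-l})))))"
    obtain i j where p: "p = (i,j)" by fastforce
    have "i < j \<and> j < n \<and> bt n b u l i j"
      using h o unfolding p bt_def by (elim UnE) auto
    then show "p \<in> Bp n b u l" unfolding Bp_def p by simp
  qed
qed

lemma card_Bp:
  assumes "ok n b u l"
  shows "card (Bp n b u l) = 3 + u*l + u*(b-2-u) + l*(n-l-b-2)"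
proof -
  have o: "1 \<le> u" "u + 3 \<le> b" "1 \<le> l" "b + l + 3 \<le> n" using assms(1) unfolding ok_def by auto
  define S7 where "S7 = ({0::nat} \<times> {b+1<..<n-l})"
  define S6 where "S6 = {b+1<..<n-l} \<times> {n-l<..<n} \<union> S7"
  define S5 where "S5 = {(b+1,n-l)} \<union> S6"
  define S4 where "S4 = {..<u} \<times> {u<..<b-1} \<union> S5"
  define S3 where "S3 = {(u,b-1)} \<union> S4"
  define S2 where "S2 = {1..u} \<times> {n-l..<n} \<union> S3"
  have eq: "Bp n b u l = {(0,b)} \<union> S2" unfolding S2_def S3_def S4_def S5_def S6_def S7_def using Bp_eq[OF assms] .
  have c7: "card S7 = n-l-b-2" unfolding S7_def by simp
  have c6: "card S6 = (n-l-b-2)*(l-1) + (n-l-b-2)" unfolding S6_def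
    by (subst card_Un_disjoint) (auto simp: S7_def c7[unfolded S7_def])
  have c5: "card S5 = 1 + card S6" unfolding S5_def
    by (subst card_Un_disjoint) (use o in \<open>auto simp: S6_def S7_def\<close>)
  have c4: "card S4 = u*(b-2-u) + card S5" unfolding S4_def
    by (subst card_Un_disjoint) (use o in \<open>auto simp: S5_def S6_def S7_def\<close>)
  have c3: "card S3 = 1 + card S4" unfolding S3_def
    by (subst card_Un_disjoint) (use o in \<open>auto simp: S4_def S5_def S6_def S7_def\<close>)
  have c2: "card S2 = u*l + card S3" unfolding S2_def
    by (subst card_Un_disjoint) (use o in \<open>auto simp: S3_def S4_def S5_def S6_def S7_def\<close>)
  have c1: "card (Bp n b u l) = 1 + card S2" unfolding eq
    by (subst card_Un_disjoint) (use o in \<open>auto simp: S2_def S3_def S4_def S5_def S6_def S7_def\<close>)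
  have "\<And>M::nat. M*(l-1) + M = l*M" using o by (cases l) (auto simp: algebra_simps)
  then have "(n-l-b-2)*(l-1) + (n-l-b-2) = l*(n-l-b-2)" by blast
  then show ?thesis using c1 c2 c3 c4 c5 c6 by simp
qed

lemma inj_pairs: "inj_on (\<lambda>(i,j). {i,j}) (Bp n b u l)"
  unfolding inj_on_def Bp_def by (auto simp: doubleton_eq_iff)

lemma finite_Bp: "finite (Bp n b u l)"
proof -
  have "Bp n b u l \<subseteq> {..<n} \<times> {..<n}" unfolding Bp_def by auto
  then show ?thesis using finite_subset by blast
qed

lemma Bs_nt:
  assumes "ok n b u l"
  shows "nt_blocker n (3 + u*l + u*(b-2-u) + l*(n-l-b-2)) (Bs n b u l)"
  unfolding nt_blocker_def saturated_blocker_def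
proof (intro conjI)
  show "blocker n (Bs n b u l)" using Bs_blocker[OF assms] .
  show "\<forall>e\<in>Bs n b u l. \<not> blocker n (Bs n b u l - {e})" using Bs_sat[OF assms] by blast
  show "finite (Bs n b u l)" unfolding Bs_def using finite_Bp by blast
  show "card (Bs n b u l) = 3 + u*l + u*(b-2-u) + l*(n-l-b-2)"
    unfolding Bs_def using card_image[OF inj_pairs] card_Bp[OF assms] by simp
qed

lemma aux0: "(8::nat)*(4+K+2*k)+16 \<le> 4*K+24*k+36+4*(2*k+6) \<Longrightarrow> 7*k \<le> K \<Longrightarrow> 7 \<le> k \<Longrightarrow> False"
  unfolding distrib_left by linarith
lemma aux1: "(8::nat)*(5+K+3*k)+16 \<le> 4*K+28*k+49+4*(2*k+7) \<Longrightarrow> 7*k \<le> K \<Longrightarrow> 7 \<le> k \<Longrightarrow> False"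
  unfolding distrib_left by linarith

lemma param_ind:
  fixes n d :: nat
  assumes "21 \<le> n"
  shows "8*(n-2+d) \<le> n*n+4*n-16 \<Longrightarrow> \<exists>k a r. 1 \<le> k \<and> n = 2*k+6+a+r \<and> n-2+d = 3 + k*(k+2+a+r) + a"
proof (induction d)
  case 0
  show ?case by (rule exI[of _ 1], rule exI[of _ 0], rule exI[of _ "n-8"]) (use assms in auto)
next
  case (Suc d)
  have "8*(n-2+d) \<le> n*n+4*n-16" using Suc.prems by simp
  then obtain k a r where kar: "1 \<le> k" "n = 2*k+6+a+r" "n-2+d = 3 + k*(k+2+a+r) + a" using Suc.IH by blast
  show ?case
  proof (cases "r = 0")
    case False
    show ?thesis by (rule exI[of _ k], rule exI[of _ "a+1"], rule exI[of _ "r-1"]) (use kar False in \<open>auto simp: algebra_simps\<close>)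
  next
    case r0: True
    show ?thesis
    proof (cases "2 \<le> a")
      case True
      show ?thesis
      proof (rule exI[of _ "k+1"], rule exI[of _ 0], rule exI[of _ "a-2"], intro conjI)
        show "1 \<le> k+1" by simp
        show "n = 2*(k+1)+6+0+(a-2)" using kar r0 True by simp
        have X: "(k+1)*((k+1)+2+0+(a-2)) = k*k + 2*k + k*a + a + 1"
        proof -
          have "(k+1)+2+0+(a-2) = k+1+a" using True by simp
          then have "(k+1)*((k+1)+2+0+(a-2)) = (k+1)*(k+1+a)" by (rule arg_cong)
          also have "... = k*k + 2*k + k*a + a + 1" by (simp add: algebra_simps)
          finally show ?thesis .
        qed
        have Y: "k*(k+2+a+r) = k*k+2*k+k*a" using r0 by (simp add: algebra_simps)
        show "n-2+Suc d = 3 + (k+1)*((k+1)+2+0+(a-2)) + 0"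
          using kar(3) X Y by linarith
      qed
    next
      case False
      have k7: "7 \<le> k" using kar(2) r0 False assms by auto
      then have kk: "7*k \<le> k*k" by simp
      have e1: "n - 2 + Suc d = 4 + k*k + 2*k + k*a + a" using kar r0 by (simp add: algebra_simps)
      have e2: "n*n = 4*(k*k) + 24*k + 36 + 4*k*a + 12*a + a*a" using kar(2) r0 by (simp add: algebra_simps)
      have "a = 0 \<or> a = 1" using False by auto
      then show ?thesis
      proof
        assume a0: "a = 0"
        have "8*(4 + k*k + 2*k) + 16 \<le> 4*(k*k) + 24*k + 36 + 4*(2*k+6)"
          using Suc.prems e1 e2 a0 kar(2) r0 by simp
        then have False using kk k7 aux0 aux1 by blast
        then show ?thesis ..
      next
        assume a1: "a = 1"
        have "8*(5 + k*k + 3*k) + 16 \<le> 4*(k*k) + 28*k + 49 + 4*(2*k+7)"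
          using Suc.prems e1 e2 a1 kar(2) r0 by simp
        then have False using kk k7 aux0 aux1 by blast
        then show ?thesis ..
      qed
    qed
  qed
qed

lemma param:
  fixes n t :: nat
  assumes "21 \<le> n" "n - 2 \<le> t" "8*t \<le> n*n+4*n-16"
  shows "\<exists>u a l m. 1 \<le> u \<and> 1 \<le> a \<and> 1 \<le> l \<and> 1 \<le> m \<and> n = u+a+l+m+4 \<and> t = 3 + u*l + u*a + l*m"
proof -
  define d where "d = t - (n-2)"
  have td: "t = n-2+d" using assms(2) unfolding d_def by simp
  obtain k a r where kar: "1 \<le> k" "n = 2*k+6+a+r" "t = 3 + k*(k+2+a+r) + a"
    using param_ind[OF assms(1), of d] assms(3) td by auto
  show ?thesis
  proof (cases "a = 0")
    case True
    show ?thesis by (rule exI[of _ k], rule exI[of _ 1], rule exI[of _ k], rule exI[of _ "r+1"]) (use kar True in \<open>auto simp: algebra_simps\<close>)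
  next
    case False
    show ?thesis by (rule exI[of _ "k+1"], rule exI[of _ a], rule exI[of _ k], rule exI[of _ "r+1"]) (use kar False in \<open>auto simp: algebra_simps\<close>)
  qed
qed

theorem lemma3p5:
  fixes n t :: nat
  assumes "n \<ge> 21"
    and "real n ^ 2 / 8 + real n / 4 - 11 / 8 \<le> real t"
    and "real t \<le> real n ^ 2 / 8 + real n / 2 - 2"
  shows "\<exists>B. nt_blocker n t B"
proof -
  have n21: "21 * real n \<le> real n * real n" using assms(1) by (intro mult_right_mono) auto
  have "real n - 2 \<le> real t" using assms(2) n21 unfolding power2_eq_square by linarith
  then have lo: "n - 2 \<le> t" using assms(1) by linarith
  have "8 * real t \<le> real n * real n + 4 * real n - 16" using assms(3) unfolding power2_eq_square by linarith
  moreover have "16 \<le> n*n+4*n" using assms(1) by simp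
  ultimately have "real (8*t) \<le> real (n*n+4*n-16)" by (simp add: of_nat_diff)
  then have hi: "8*t \<le> n*n+4*n-16" by linarith
  obtain u a l m where p: "1 \<le> u" "1 \<le> a" "1 \<le> l" "1 \<le> m" "n = u+a+l+m+4" "t = 3 + u*l + u*a + l*m"
    using param[OF assms(1) lo hi] by blast
  define b where "b = u + 2 + a"
  have okb: "ok n b u l" unfolding ok_def b_def using p by auto
  have "b - 2 - u = a" "n - l - b - 2 = m" unfolding b_def using p by auto
  then have "t = 3 + u*l + u*(b-2-u) + l*(n-l-b-2)" using p by simp
  then show ?thesis using Bs_nt[OF okb] by metis
qed

end
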